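(* In full second-order logic (full semantics), for any structure $\mathcal{M}$ in the signature $\{\in\}$: $\mathcal{M}\models\mathsf{LT}$ if and only if $\mathcal{M}$ is isomorphic to $\mathcal{V}_\alpha$ for some ordinal $\alpha>0$.
   Context: In the model theory, $V_0=\emptyset$, $V_{\alpha+1}=\mathcal{P}(V_\alpha)$, $V_\lambda=\bigcup_{\beta<\lambda}V_\beta$ for limit $\lambda$, and $\mathcal{V}_\alpha$ is the structure with domain $V_\alpha$ interpreting $\in$ as membership restricted to $V_\alpha$. Potentiation: $\mathrm{pot}(a)=\{x:\exists c(x\subseteq c\wedge c\in a)\}$. A history is a set $h$ with $x=\mathrm{pot}(x\cap h)$ for all $x\in h$; a level is $\mathrm{pot}(h)$ for some history $h$. $\mathsf{LT}$ (Level Theory) is the second-order theory with axioms Extensionality $\forall a\forall b(\forall x(x\in a\leftrightarrow x\in b)\to a=b)$, Separation $\forall F\forall a\exists b\forall x(x\in b\leftrightarrow(F(x)\wedge x\in a))$, and Stratification: every set is a subset of some level. *)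

theory Defs
  imports Main
begin

text \<open>A structure is a nonempty domain D together with a binary relation E
  (interpreting \<in>); everything is relativised to D. Full second-order
  semantics: second-order variables range over all subsets of the domain.\<close>

definition sub_M :: "'a set \<Rightarrow> ('a \<Rightarrow> 'a \<Rightarrow> bool) \<Rightarrow> 'a \<Rightarrow> 'a \<Rightarrow> bool" where
  "sub_M D E x c \<longleftrightarrow> (\<forall>y\<in>D. E y x \<longrightarrow> E y c)"

definition is_pot_of :: "'a set \<Rightarrow> ('a \<Rightarrow> 'a \<Rightarrow> bool) \<Rightarrow> 'a \<Rightarrow> 'a \<Rightarrow> bool" where
  "is_pot_of D E l a \<longleftrightarrow> (\<forall>x\<in>D. E x l \<longleftrightarrow> (\<exists>c\<in>D. E c a \<and> sub_M D E x c))"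

text \<open>h is a history: every x \<in> h satisfies x = pot(x \<inter> h).\<close>
definition history :: "'a set \<Rightarrow> ('a \<Rightarrow> 'a \<Rightarrow> bool) \<Rightarrow> 'a \<Rightarrow> bool" where
  "history D E h \<longleftrightarrow> (\<forall>x\<in>D. E x h \<longrightarrow>
      (\<forall>y\<in>D. E y x \<longleftrightarrow> (\<exists>c\<in>D. E c x \<and> E c h \<and> sub_M D E y c)))"

definition level :: "'a set \<Rightarrow> ('a \<Rightarrow> 'a \<Rightarrow> bool) \<Rightarrow> 'a \<Rightarrow> bool" where
  "level D E l \<longleftrightarrow> (\<exists>h\<in>D. history D E h \<and> is_pot_of D E l h)"

definition LT_model :: "'a set \<Rightarrow> ('a \<Rightarrow> 'a \<Rightarrow> bool) \<Rightarrow> bool" where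
  "LT_model D E \<longleftrightarrow>
     \<comment> \<open>Extensionality\<close>
     (\<forall>a\<in>D. \<forall>b\<in>D. (\<forall>x\<in>D. E x a \<longleftrightarrow> E x b) \<longrightarrow> a = b) \<and>
     \<comment> \<open>Separation (second-order, full semantics)\<close>
     (\<forall>F :: 'a set. \<forall>a\<in>D. \<exists>b\<in>D. \<forall>x\<in>D. E x b \<longleftrightarrow> (x \<in> F \<and> E x a)) \<and>
     \<comment> \<open>Stratification\<close>
     (\<forall>a\<in>D. \<exists>l\<in>D. level D E l \<and> sub_M D E a l)"

text \<open>Pure sets are coded as accessible pointed graphs: a code (R, x) is a
  well-founded relation R on nodes with a root x; (u, v) \<in> R means u \<in> v.
  Two codes denote the same set iff they are bisimilar.\<close>

type_synonym 'n code = "('n \<times> 'n) set \<times> 'n"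

definition is_code :: "'n code \<Rightarrow> bool" where
  "is_code c \<longleftrightarrow> wf (fst c)"

definition code_eq :: "'n code \<Rightarrow> 'n code \<Rightarrow> bool" where
  "code_eq c d \<longleftrightarrow> (\<exists>B. (snd c, snd d) \<in> B \<and>
     (\<forall>(u, v)\<in>B.
        (\<forall>u'. (u', u) \<in> fst c \<longrightarrow> (\<exists>v'. (v', v) \<in> fst d \<and> (u', v') \<in> B)) \<and>
        (\<forall>v'. (v', v) \<in> fst d \<longrightarrow> (\<exists>u'. (u', u) \<in> fst c \<and> (u', v') \<in> B))))"

definition code_mem :: "'n code \<Rightarrow> 'n code \<Rightarrow> bool" where
  "code_mem c d \<longleftrightarrow> (\<exists>z. (z, snd d) \<in> fst d \<and> code_eq c (fst d, z))"

text \<open>Ordinals are (order types of) well-orders r. The code c has rank < r iff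
  the nodes below (and including) its root admit a strictly increasing map
  into the field of r.\<close>
definition rank_below :: "'o rel \<Rightarrow> 'n code \<Rightarrow> bool" where
  "rank_below r c \<longleftrightarrow> (\<exists>f. (\<forall>u. (u, snd c) \<in> (fst c)\<^sup>* \<longrightarrow> f u \<in> Field r) \<and>
     (\<forall>u v. (u, v) \<in> fst c \<and> (v, snd c) \<in> (fst c)\<^sup>* \<longrightarrow> (f u, f v) \<in> r \<and> f u \<noteq> f v))"

definition Vcode :: "'o rel \<Rightarrow> 'n code set" where
  "Vcode r = {c. is_code c \<and> rank_below r c}"

text \<open>Nodes are taken from 'a + nat (large enough to code every element of any
  V_alpha of cardinality at most that of 'a).\<close>
definition iso_V :: "'a set \<Rightarrow> ('a \<Rightarrow> 'a \<Rightarrow> bool) \<Rightarrow> ('o rel) \<Rightarrow> bool" where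
  "iso_V D E r \<longleftrightarrow> (\<exists>g :: 'a \<Rightarrow> ('a + nat) code.
     (\<forall>d\<in>D. g d \<in> Vcode r) \<and>
     (\<forall>d\<in>D. \<forall>e\<in>D. code_eq (g d) (g e) \<longrightarrow> d = e) \<and>
     (\<forall>c\<in>Vcode r. \<exists>d\<in>D. code_eq c (g d)) \<and>
     (\<forall>d\<in>D. \<forall>e\<in>D. E d e \<longleftrightarrow> code_mem (g d) (g e)))"

end

theory Submission
  imports Defs
begin



definition bis :: "('n \<times> 'n) set \<Rightarrow> ('n \<times> 'n) set \<Rightarrow> ('n \<times> 'n) set \<Rightarrow> bool" where
  "bis R S B \<longleftrightarrow> (\<forall>(u, v)\<in>B.
        (\<forall>u'. (u', u) \<in> R \<longrightarrow> (\<exists>v'. (v', v) \<in> S \<and> (u', v') \<in> B)) \<and>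
        (\<forall>v'. (v', v) \<in> S \<longrightarrow> (\<exists>u'. (u', u) \<in> R \<and> (u', v') \<in> B)))"

lemma code_eq_bis: "code_eq (R, x) (S, y) \<longleftrightarrow> (\<exists>B. bis R S B \<and> (x, y) \<in> B)"
  unfolding code_eq_def bis_def fst_conv snd_conv by (rule iff_exI) (rule conj_commute)

lemma bisD1: "bis R S B \<Longrightarrow> (u, v) \<in> B \<Longrightarrow> (u', u) \<in> R \<Longrightarrow> \<exists>v'. (v', v) \<in> S \<and> (u', v') \<in> B"
  unfolding bis_def by (drule bspec) auto
lemma bisD2: "bis R S B \<Longrightarrow> (u, v) \<in> B \<Longrightarrow> (v', v) \<in> S \<Longrightarrow> \<exists>u'. (u', u) \<in> R \<and> (u', v') \<in> B"
  unfolding bis_def by (drule bspec) auto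
lemma bisI: "(\<And>u v u'. (u, v) \<in> B \<Longrightarrow> (u', u) \<in> R \<Longrightarrow> \<exists>v'. (v', v) \<in> S \<and> (u', v') \<in> B) \<Longrightarrow>
   (\<And>u v v'. (u, v) \<in> B \<Longrightarrow> (v', v) \<in> S \<Longrightarrow> \<exists>u'. (u', u) \<in> R \<and> (u', v') \<in> B) \<Longrightarrow> bis R S B"
  unfolding bis_def by auto

lemma code_eq_refl: "code_eq c c"
proof -
  obtain R x where c: "c = (R, x)" by fastforce
  have "bis R R Id" by (rule bisI) auto
  then show ?thesis unfolding c code_eq_bis by blast
qed

lemma code_eq_sym: "code_eq c d \<Longrightarrow> code_eq d c"
proof -
  assume a: "code_eq c d"
  obtain R x where c: "c = (R, x)" by fastforce
  obtain S y where d: "d = (S, y)" by fastforce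
  from a(1) obtain B where B: "bis R S B" "(x, y) \<in> B" unfolding c d code_eq_bis by blast
  have "bis S R (B\<inverse>)"
  proof (rule bisI)
    fix u v u' assume "(u, v) \<in> B\<inverse>" "(u', u) \<in> S"
    thus "\<exists>v'. (v', v) \<in> R \<and> (u', v') \<in> B\<inverse>" using bisD2[OF B(1)] by blast
  next
    fix u v v' assume "(u, v) \<in> B\<inverse>" "(v', v) \<in> R"
    thus "\<exists>u'. (u', u) \<in> S \<and> (u', v') \<in> B\<inverse>" using bisD1[OF B(1)] by blast
  qed
  then show ?thesis unfolding c d code_eq_bis using B(2) by blast
qed

lemma code_eq_trans: "code_eq c d \<Longrightarrow> code_eq d e \<Longrightarrow> code_eq c e"
proof -
  assume a: "code_eq c d" "code_eq d e"
  obtain R x where c: "c = (R, x)" by fastforce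
  obtain S y where d: "d = (S, y)" by fastforce
  obtain T z where e: "e = (T, z)" by fastforce
  from a(1) obtain B where B: "bis R S B" "(x, y) \<in> B" unfolding c d code_eq_bis by blast
  from a(2) obtain C where C: "bis S T C" "(y, z) \<in> C" unfolding e d code_eq_bis by blast
  have "bis R T (B O C)"
  proof (rule bisI)
    fix u w u' assume "(u, w) \<in> B O C" "(u', u) \<in> R"
    then obtain v where uv: "(u, v) \<in> B" and vw: "(v, w) \<in> C" by blast
    obtain v' where "(v', v) \<in> S" "(u', v') \<in> B" using bisD1[OF B(1) uv \<open>(u', u) \<in> R\<close>] by blast
    moreover obtain w' where "(w', w) \<in> T" "(v', w') \<in> C" using bisD1[OF C(1) vw \<open>(v', v) \<in> S\<close>] by blast
    ultimately show "\<exists>v'. (v', w) \<in> T \<and> (u', v') \<in> B O C" by blast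
  next
    fix u w w' assume "(u, w) \<in> B O C" "(w', w) \<in> T"
    then obtain v where uv: "(u, v) \<in> B" and vw: "(v, w) \<in> C" by blast
    obtain v' where "(v', v) \<in> S" "(v', w') \<in> C" using bisD2[OF C(1) vw \<open>(w', w) \<in> T\<close>] by blast
    moreover obtain u' where "(u', u) \<in> R" "(u', v') \<in> B" using bisD2[OF B(1) uv \<open>(v', v) \<in> S\<close>] by blast
    ultimately show "\<exists>u'. (u', u) \<in> R \<and> (u', w') \<in> B O C" by blast
  qed
  then show ?thesis unfolding c e code_eq_bis using B(2) C(2) by blast
qed


lemma code_eq_children:
  "code_eq (R, x) (S, y) \<longleftrightarrow>
    (\<forall>x'. (x', x) \<in> R \<longrightarrow> (\<exists>y'. (y', y) \<in> S \<and> code_eq (R, x') (S, y'))) \<and>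
    (\<forall>y'. (y', y) \<in> S \<longrightarrow> (\<exists>x'. (x', x) \<in> R \<and> code_eq (R, x') (S, y')))"
proof
  assume "code_eq (R, x) (S, y)"
  then obtain B where B: "bis R S B" "(x, y) \<in> B" unfolding code_eq_bis by blast
  show "(\<forall>x'. (x', x) \<in> R \<longrightarrow> (\<exists>y'. (y', y) \<in> S \<and> code_eq (R, x') (S, y'))) \<and>
    (\<forall>y'. (y', y) \<in> S \<longrightarrow> (\<exists>x'. (x', x) \<in> R \<and> code_eq (R, x') (S, y')))"
  proof (intro conjI allI impI)
    fix x' assume "(x', x) \<in> R"
    then obtain y' where "(y', y) \<in> S" "(x', y') \<in> B" using bisD1[OF B(1) B(2)] by blast
    thus "\<exists>y'. (y', y) \<in> S \<and> code_eq (R, x') (S, y')" unfolding code_eq_bis using B(1) by blast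
  next
    fix y' assume "(y', y) \<in> S"
    then obtain x' where "(x', x) \<in> R" "(x', y') \<in> B" using bisD2[OF B(1) B(2)] by blast
    thus "\<exists>x'. (x', x) \<in> R \<and> code_eq (R, x') (S, y')" unfolding code_eq_bis using B(1) by blast
  qed
next
  assume H: "(\<forall>x'. (x', x) \<in> R \<longrightarrow> (\<exists>y'. (y', y) \<in> S \<and> code_eq (R, x') (S, y'))) \<and>
    (\<forall>y'. (y', y) \<in> S \<longrightarrow> (\<exists>x'. (x', x) \<in> R \<and> code_eq (R, x') (S, y')))"
  define U where "U = \<Union>{B. bis R S B}"
  have cU: "(a, b) \<in> U" if ab: "code_eq (R, a) (S, b)" for a b
  proof -
    obtain B where "bis R S B" "(a, b) \<in> B" using ab unfolding code_eq_bis by blast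
    thus "(a, b) \<in> U" unfolding U_def by blast
  qed
  have Ub: "\<exists>B. bis R S B \<and> (u, v) \<in> B" if "(u, v) \<in> U" for u v
    using that unfolding U_def by blast
  have "bis R S (insert (x, y) U)"
  proof (rule bisI)
    fix u v u' assume uv: "(u, v) \<in> insert (x, y) U" and uu: "(u', u) \<in> R"
    show "\<exists>v'. (v', v) \<in> S \<and> (u', v') \<in> insert (x, y) U"
    proof (cases "(u, v) = (x, y)")
      case True
      then have "u = x" "v = y" by auto
      then obtain v' where "(v', v) \<in> S" "code_eq (R, u') (S, v')" using H uu by blast
      then show ?thesis using cU by blast
    next
      case False
      then obtain B where B: "bis R S B" "(u, v) \<in> B" using uv Ub by blast
      obtain v' where "(v', v) \<in> S" "(u', v') \<in> B" using bisD1[OF B uu] by blast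
      then show ?thesis using B(1) unfolding U_def by blast
    qed
  next
    fix u v v' assume uv: "(u, v) \<in> insert (x, y) U" and vv: "(v', v) \<in> S"
    show "\<exists>u'. (u', u) \<in> R \<and> (u', v') \<in> insert (x, y) U"
    proof (cases "(u, v) = (x, y)")
      case True
      then have "u = x" "v = y" by auto
      then obtain u' where "(u', u) \<in> R" "code_eq (R, u') (S, v')" using H vv by blast
      then show ?thesis using cU by blast
    next
      case False
      then obtain B where B: "bis R S B" "(u, v) \<in> B" using uv Ub by blast
      obtain u' where "(u', u) \<in> R" "(u', v') \<in> B" using bisD2[OF B vv] by blast
      then show ?thesis using B(1) unfolding U_def by blast
    qed
  qed
  then show "code_eq (R, x) (S, y)" unfolding code_eq_bis by blast
qed

lemma code_eq_childD1: "code_eq (R, x) (S, y) \<Longrightarrow> (x', x) \<in> R \<Longrightarrow> \<exists>y'. (y', y) \<in> S \<and> code_eq (R, x') (S, y')"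
  using code_eq_children[of R x S y] by blast

lemma code_eq_childD2: "code_eq (R, x) (S, y) \<Longrightarrow> (y', y) \<in> S \<Longrightarrow> \<exists>x'. (x', x) \<in> R \<and> code_eq (R, x') (S, y')"
  using code_eq_children[of R x S y] by blast

lemma code_eq_childI: "(\<And>x'. (x', x) \<in> R \<Longrightarrow> \<exists>y'. (y', y) \<in> S \<and> code_eq (R, x') (S, y')) \<Longrightarrow>
  (\<And>y'. (y', y) \<in> S \<Longrightarrow> \<exists>x'. (x', x) \<in> R \<and> code_eq (R, x') (S, y')) \<Longrightarrow> code_eq (R, x) (S, y)"
  using code_eq_children[of R x S y] by blast




definition rank_map :: "'o rel \<Rightarrow> 'n code \<Rightarrow> ('n \<Rightarrow> 'o) \<Rightarrow> bool" where
  "rank_map r c f \<longleftrightarrow> (\<forall>u. (u, snd c) \<in> (fst c)\<^sup>* \<longrightarrow> f u \<in> Field r) \<and>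
     (\<forall>u v. (u, v) \<in> fst c \<and> (v, snd c) \<in> (fst c)\<^sup>* \<longrightarrow> (f u, f v) \<in> r \<and> f u \<noteq> f v)"

lemma rank_below_iff: "rank_below r c \<longleftrightarrow> (\<exists>f. rank_map r c f)"
  unfolding rank_below_def rank_map_def by (rule refl)

lemma rank_mapI: "(\<And>u. (u, x) \<in> R\<^sup>* \<Longrightarrow> f u \<in> Field r) \<Longrightarrow>
   (\<And>u v. (u, v) \<in> R \<Longrightarrow> (v, x) \<in> R\<^sup>* \<Longrightarrow> (f u, f v) \<in> r \<and> f u \<noteq> f v) \<Longrightarrow> rank_map r (R, x) f"
  unfolding rank_map_def by auto

lemma rank_map_field: "rank_map r (R, x) f \<Longrightarrow> (u, x) \<in> R\<^sup>* \<Longrightarrow> f u \<in> Field r"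
  unfolding rank_map_def by auto

lemma rank_map_edge: "rank_map r (R, x) f \<Longrightarrow> (u, v) \<in> R \<Longrightarrow> (v, x) \<in> R\<^sup>* \<Longrightarrow> (f u, f v) \<in> r \<and> f u \<noteq> f v"
  unfolding rank_map_def by auto

lemma rank_map_sub: "rank_map r (R, x) f \<Longrightarrow> (x', x) \<in> R\<^sup>* \<Longrightarrow> rank_map r (R, x') f"
proof (rule rank_mapI)
  fix u assume "rank_map r (R, x) f" "(x', x) \<in> R\<^sup>*" "(u, x') \<in> R\<^sup>*"
  thus "f u \<in> Field r" using rank_map_field rtrancl_trans by metis
next
  fix u v assume "rank_map r (R, x) f" "(x', x) \<in> R\<^sup>*" "(u, v) \<in> R" "(v, x') \<in> R\<^sup>*"
  thus "(f u, f v) \<in> r \<and> f u \<noteq> f v" using rank_map_edge rtrancl_trans by metis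
qed

lemma wo_trans: "Well_order r \<Longrightarrow> (a, b) \<in> r \<Longrightarrow> (b, c) \<in> r \<Longrightarrow> (a, c) \<in> r"
  unfolding well_order_on_def linear_order_on_def partial_order_on_def preorder_on_def trans_def
  by blast

lemma wo_antisym: "Well_order r \<Longrightarrow> (a, b) \<in> r \<Longrightarrow> (b, a) \<in> r \<Longrightarrow> a = b"
  unfolding well_order_on_def linear_order_on_def partial_order_on_def antisym_def
  by blast

lemma wo_le_less: "Well_order r \<Longrightarrow> (a, b) \<in> r \<Longrightarrow> (b, c) \<in> r \<Longrightarrow> b \<noteq> c \<Longrightarrow> (a, c) \<in> r \<and> a \<noteq> c"
  using wo_trans wo_antisym by metis

lemma wo_less_le: "Well_order r \<Longrightarrow> (a, b) \<in> r \<Longrightarrow> a \<noteq> b \<Longrightarrow> (b, c) \<in> r \<Longrightarrow> (a, c) \<in> r \<and> a \<noteq> c"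
  using wo_trans wo_antisym by metis

lemma wo_refl: "Well_order r \<Longrightarrow> a \<in> Field r \<Longrightarrow> (a, a) \<in> r"
  unfolding well_order_on_def linear_order_on_def partial_order_on_def preorder_on_def refl_on_def
  by blast

lemma wo_wf: "Well_order r \<Longrightarrow> wf (r - Id)"
  unfolding well_order_on_def by blast

lemma wo_minim_in: "Well_order r \<Longrightarrow> B \<subseteq> Field r \<Longrightarrow> B \<noteq> {} \<Longrightarrow> wo_rel.minim r B \<in> B"
  using wo_rel.minim_in wo_rel_def by metis

lemma wo_minim_least: "Well_order r \<Longrightarrow> B \<subseteq> Field r \<Longrightarrow> b \<in> B \<Longrightarrow> (wo_rel.minim r B, b) \<in> r"
  using wo_rel.minim_least wo_rel_def by metis

lemma transport:
  assumes wo: "Well_order r" and eq: "code_eq (R, x) (S, y)" and f: "rank_map r (R, x) f"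
  shows "\<exists>g. rank_map r (S, y) g \<and> (g y, f x) \<in> r"
proof -
  obtain B where B: "bis R S B" "(x, y) \<in> B" using eq unfolding code_eq_bis by blast
  define A where "A w = {f v | v. (v, x) \<in> R\<^sup>* \<and> (v, w) \<in> B}" for w
  define g where "g w = wo_rel.minim r (A w)" for w
  have AF: "A w \<subseteq> Field r" for w
    unfolding A_def using rank_map_field[OF f] by blast
  have ne: "\<exists>v. (v, x) \<in> R\<^sup>* \<and> (v, w) \<in> B" if "(w, y) \<in> S\<^sup>*" for w
    using that
  proof (induction rule: converse_rtrancl_induct)
    case base
    then show ?case using B(2) by blast
  next
    case (step w w2)
    then obtain v2 where v2: "(v2, x) \<in> R\<^sup>*" "(v2, w2) \<in> B" by blast
    obtain v1 where "(v1, v2) \<in> R" "(v1, w) \<in> B" using bisD2[OF B(1) v2(2) step(1)] by blast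
    then show ?case using v2(1) by (meson converse_rtrancl_into_rtrancl)
  qed
  have gA: "g w \<in> A w" if "(w, y) \<in> S\<^sup>*" for w
  proof -
    have "A w \<noteq> {}" using ne[OF that] unfolding A_def by blast
    thus ?thesis unfolding g_def using wo_minim_in[OF wo AF] by blast
  qed
  have gle: "(g w, a) \<in> r" if "a \<in> A w" for w a
    unfolding g_def using wo_minim_least[OF wo AF that] .
  have "rank_map r (S, y) g"
  proof (rule rank_mapI)
    fix u assume "(u, y) \<in> S\<^sup>*"
    thus "g u \<in> Field r" using gA AF by blast
  next
    fix w1 w2 assume e: "(w1, w2) \<in> S" and w2: "(w2, y) \<in> S\<^sup>*"
    obtain v2 where v2: "g w2 = f v2" "(v2, x) \<in> R\<^sup>*" "(v2, w2) \<in> B" using gA[OF w2] unfolding A_def by blast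
    obtain v1 where v1: "(v1, v2) \<in> R" "(v1, w1) \<in> B" using bisD2[OF B(1) v2(3) e] by blast
    have v1x: "(v1, x) \<in> R\<^sup>*" using v1(1) v2(2) by (meson converse_rtrancl_into_rtrancl)
    have "f v1 \<in> A w1" unfolding A_def using v1x v1(2) by blast
    hence le: "(g w1, f v1) \<in> r" by (rule gle)
    have "(f v1, f v2) \<in> r \<and> f v1 \<noteq> f v2" using rank_map_edge[OF f v1(1) v2(2)] .
    thus "(g w1, g w2) \<in> r \<and> g w1 \<noteq> g w2" using wo_le_less[OF wo le] v2(1) by auto
  qed
  moreover have "f x \<in> A y" unfolding A_def using B(2) by blast
  ultimately show ?thesis using gle by blast
qed




definition Ed :: "'a set \<Rightarrow> ('a \<Rightarrow> 'a \<Rightarrow> bool) \<Rightarrow> ('a \<times> 'a) set" where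
  "Ed D E = {(x, y). x \<in> D \<and> y \<in> D \<and> E x y}"

definition RD :: "'a set \<Rightarrow> ('a \<Rightarrow> 'a \<Rightarrow> bool) \<Rightarrow> (('a + nat) \<times> ('a + nat)) set" where
  "RD D E = {(Inl x, Inl y) | x y. x \<in> D \<and> y \<in> D \<and> E x y}"

definition RS :: "'a set \<Rightarrow> ('a \<Rightarrow> 'a \<Rightarrow> bool) \<Rightarrow> 'a set \<Rightarrow> (('a + nat) \<times> ('a + nat)) set" where
  "RS D E S = RD D E \<union> {(Inl x, Inr 0) | x. x \<in> S}"

definition gg :: "'a set \<Rightarrow> ('a \<Rightarrow> 'a \<Rightarrow> bool) \<Rightarrow> (('a + nat) \<times> ('a + nat)) set \<Rightarrow> bool" where
  "gg D E R \<longleftrightarrow> (\<forall>y\<in>D. \<forall>z. (z, Inl y) \<in> R \<longleftrightarrow> (\<exists>x\<in>D. z = Inl x \<and> E x y))"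

lemma RD_iff: "(a, b) \<in> RD D E \<longleftrightarrow> (\<exists>x y. a = Inl x \<and> b = Inl y \<and> x \<in> D \<and> y \<in> D \<and> E x y)"
  unfolding RD_def by blast

lemma RS_iff: "(a, b) \<in> RS D E S \<longleftrightarrow> (\<exists>x y. a = Inl x \<and> b = Inl y \<and> x \<in> D \<and> y \<in> D \<and> E x y)
   \<or> (\<exists>x\<in>S. a = Inl x \<and> b = Inr 0)"
  unfolding RS_def Un_iff RD_iff by blast

lemma gg_RD: "gg D E (RD D E)"
  unfolding gg_def RD_iff by blast

lemma gg_RS: "gg D E (RS D E S)"
  unfolding gg_def RS_iff by blast

lemma ggD: "gg D E R \<Longrightarrow> y \<in> D \<Longrightarrow> (z, Inl y) \<in> R \<longleftrightarrow> (\<exists>x\<in>D. z = Inl x \<and> E x y)"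
  unfolding gg_def by blast

lemma ggI: "gg D E R \<Longrightarrow> y \<in> D \<Longrightarrow> x \<in> D \<Longrightarrow> E x y \<Longrightarrow> (Inl x, Inl y) \<in> R"
  unfolding gg_def by blast

lemma ggE: "gg D E R \<Longrightarrow> y \<in> D \<Longrightarrow> (z, Inl y) \<in> R \<Longrightarrow> \<exists>x\<in>D. z = Inl x \<and> E x y"
  unfolding gg_def by blast

lemma wf_RD: "wf (Ed D E) \<Longrightarrow> wf (RD D E)"
proof -
  assume w: "wf (Ed D E)"
  have "RD D E = map_prod Inl Inl ` Ed D E" unfolding RD_def Ed_def by auto
  thus ?thesis using wf_map_prod_image[OF w, of Inl] by (simp add: inj_def)
qed

lemma wf_RS: assumes "wf (Ed D E)" shows "wf (RS D E S)"
proof -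
  have w1: "wf (RD D E)" using wf_RD[OF assms] .
  have "{(Inl x, Inr 0) | x. x \<in> S} \<subseteq> measure (\<lambda>u. case u of Inl _ \<Rightarrow> 0 | Inr _ \<Rightarrow> (1::nat))"
    by auto
  hence w2: "wf {(Inl x, Inr 0 :: 'a + nat) | x. x \<in> S}" using wf_subset by blast
  have "Domain (RD D E) \<inter> Range {(Inl x, Inr 0 :: 'a + nat) | x. x \<in> S} = {}"
    by (auto simp: RD_iff)
  thus ?thesis unfolding RS_def using wf_Un[OF w1 w2] by blast
qed

lemma gg_reach: assumes "gg D E R" "y \<in> D" "(z, Inl y) \<in> R\<^sup>*" shows "\<exists>x\<in>D. z = Inl x"
  using assms(3)
proof (induction rule: converse_rtrancl_induct)
  case base then show ?case using assms(2) by blast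
next
  case (step z z2)
  then obtain x2 where "x2 \<in> D" "z2 = Inl x2" by blast
  then have "(z, Inl x2) \<in> R" using step(1) by simp
  then show ?case using ggD[OF assms(1) \<open>x2 \<in> D\<close>] by blast
qed

lemma RS_child0: "(z, Inr 0) \<in> RS D E S \<longleftrightarrow> (\<exists>x\<in>S. z = Inl x)"
  unfolding RS_iff by blast

lemma RS_reach: assumes "S \<subseteq> D" "(z, Inr 0) \<in> (RS D E S)\<^sup>*" shows "z = Inr 0 \<or> (\<exists>x\<in>D. z = Inl x)"
  using assms(2)
proof (induction rule: converse_rtrancl_induct)
  case base then show ?case by simp
next
  case (step z z2)
  show ?case
  proof (cases "z2 = Inr 0")
    case True
    then have "(z, Inr 0) \<in> RS D E S" using step(1) by simp
    then obtain x where "x \<in> S" "z = Inl x" unfolding RS_child0 by blast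
    then show ?thesis using assms(1) by blast
  next
    case False
    then obtain x2 where "x2 \<in> D" "z2 = Inl x2" using step(3) by blast
    then have "(z, Inl x2) \<in> RS D E S" using step(1) by simp
    then show ?thesis using ggD[OF gg_RS \<open>x2 \<in> D\<close>] by blast
  qed
qed

lemma gg_same: assumes "gg D E R" "gg D E R'" "x \<in> D" shows "code_eq (R, Inl x) (R', Inl x)"
proof -
  have "bis R R' {(Inl z, Inl z :: 'a + nat) | z. z \<in> D}"
  proof (rule bisI)
    fix u v u' :: "'a + nat" assume "(u, v) \<in> {(Inl z, Inl z :: 'a + nat) | z. z \<in> D}" "(u', u) \<in> R"
    then obtain z where z: "u = Inl z" "v = Inl z" "z \<in> D" by blast
    then obtain x where "x \<in> D" "u' = Inl x" "E x z" using ggD[OF assms(1)] \<open>(u', u) \<in> R\<close> by blast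
    then show "\<exists>v'. (v', v) \<in> R' \<and> (u', v') \<in> {(Inl z, Inl z :: 'a + nat) | z. z \<in> D}"
      using ggD[OF assms(2)] z by blast
  next
    fix u v v' :: "'a + nat" assume "(u, v) \<in> {(Inl z, Inl z :: 'a + nat) | z. z \<in> D}" "(v', v) \<in> R'"
    then obtain z where z: "u = Inl z" "v = Inl z" "z \<in> D" by blast
    then obtain x where "x \<in> D" "v' = Inl x" "E x z" using ggD[OF assms(2)] \<open>(v', v) \<in> R'\<close> by blast
    then show "\<exists>u'. (u', u) \<in> R \<and> (u', v') \<in> {(Inl z, Inl z :: 'a + nat) | z. z \<in> D}"
      using ggD[OF assms(1)] z by blast
  qed
  then show ?thesis unfolding code_eq_bis using assms(3) by blast
qed

definition ext_on :: "'a set \<Rightarrow> ('a \<Rightarrow> 'a \<Rightarrow> bool) \<Rightarrow> bool" where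
  "ext_on D E \<longleftrightarrow> (\<forall>a\<in>D. \<forall>b\<in>D. (\<forall>x\<in>D. E x a \<longleftrightarrow> E x b) \<longrightarrow> a = b)"

lemma gg_inj:
  assumes wf: "wf (Ed D E)" and ext: "ext_on D E" and g1: "gg D E R" and g2: "gg D E R'"
  shows "x \<in> D \<Longrightarrow> y \<in> D \<Longrightarrow> code_eq (R, Inl x) (R', Inl y) \<Longrightarrow> x = y"
proof (induction x arbitrary: y rule: wf_induct[OF wf])
  case (1 x)
  have "\<forall>z\<in>D. E z x \<longleftrightarrow> E z y"
  proof
    fix z assume zD: "z \<in> D"
    show "E z x \<longleftrightarrow> E z y"
    proof
      assume "E z x"
      hence "(Inl z, Inl x) \<in> R" using ggI[OF g1 1(2) zD] by blast
      then obtain y' where y': "(y', Inl y) \<in> R'" "code_eq (R, Inl z) (R', y')"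
        using code_eq_childD1[OF 1(4)] by blast
      then obtain y'' where y'': "y'' \<in> D" "y' = Inl y''" "E y'' y" using ggE[OF g2 1(3)] by blast
      have "(z, x) \<in> Ed D E" unfolding Ed_def using zD 1(2) \<open>E z x\<close> by blast
      moreover have "code_eq (R, Inl z) (R', Inl y'')" using y' y'' by simp
      ultimately have "z = y''" using 1(1) zD y''(1) by blast
      thus "E z y" using y'' by blast
    next
      assume "E z y"
      hence "(Inl z, Inl y) \<in> R'" using ggI[OF g2 1(3) zD] by blast
      then obtain x' where x': "(x', Inl x) \<in> R" "code_eq (R, x') (R', Inl z)"
        using code_eq_childD2[OF 1(4)] by blast
      then obtain x'' where x'': "x'' \<in> D" "x' = Inl x''" "E x'' x" using ggE[OF g1 1(2)] by blast
      have "(x'', x) \<in> Ed D E" unfolding Ed_def using x'' 1(2) by blast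
      moreover have "code_eq (R, Inl x'') (R', Inl z)" using x' x'' by simp
      ultimately have "x'' = z" using 1(1) zD x''(1) by blast
      thus "E z x" using x'' by blast
    qed
  qed
  thus ?case using ext 1(2,3) unfolding ext_on_def by blast
qed




definition Vlike :: "'a set \<Rightarrow> ('a \<Rightarrow> 'a \<Rightarrow> bool) \<Rightarrow> ('a + nat) rel \<Rightarrow> ('a \<Rightarrow> 'a + nat) \<Rightarrow> bool" where
  "Vlike D E W \<rho> \<longleftrightarrow> Well_order W \<and> ext_on D E \<and> (\<forall>x\<in>D. \<rho> x \<in> Field W) \<and>
    (\<forall>x\<in>D. \<forall>y\<in>D. E x y \<longrightarrow> (\<rho> x, \<rho> y) \<in> W \<and> \<rho> x \<noteq> \<rho> y) \<and>
    (\<forall>\<beta>\<in>Field W. \<forall>S. S \<subseteq> D \<and> (\<forall>x\<in>S. (\<rho> x, \<beta>) \<in> W \<and> \<rho> x \<noteq> \<beta>) \<longrightarrow>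
        (\<exists>b\<in>D. (\<forall>x\<in>D. E x b \<longleftrightarrow> x \<in> S) \<and> (\<rho> b, \<beta>) \<in> W))"

lemma VlikeD:
  assumes "Vlike D E W \<rho>"
  shows "Well_order W" "ext_on D E" "\<And>x. x \<in> D \<Longrightarrow> \<rho> x \<in> Field W"
    "\<And>x y. x \<in> D \<Longrightarrow> y \<in> D \<Longrightarrow> E x y \<Longrightarrow> (\<rho> x, \<rho> y) \<in> W \<and> \<rho> x \<noteq> \<rho> y"
    "\<And>\<beta> S. \<beta> \<in> Field W \<Longrightarrow> S \<subseteq> D \<Longrightarrow> (\<And>x. x \<in> S \<Longrightarrow> (\<rho> x, \<beta>) \<in> W \<and> \<rho> x \<noteq> \<beta>) \<Longrightarrow>
        \<exists>b\<in>D. (\<forall>x\<in>D. E x b \<longleftrightarrow> x \<in> S) \<and> (\<rho> b, \<beta>) \<in> W"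
proof -
  note A = assms[unfolded Vlike_def]
  show "Well_order W" using A by (elim conjE)
  show "ext_on D E" using A by (elim conjE)
  show "\<And>x. x \<in> D \<Longrightarrow> \<rho> x \<in> Field W" using A by (elim conjE) (erule bspec)
  show "\<And>x y. x \<in> D \<Longrightarrow> y \<in> D \<Longrightarrow> E x y \<Longrightarrow> (\<rho> x, \<rho> y) \<in> W \<and> \<rho> x \<noteq> \<rho> y"
    using A by (elim conjE) (simp)
  show "\<And>\<beta> S. \<beta> \<in> Field W \<Longrightarrow> S \<subseteq> D \<Longrightarrow> (\<And>x. x \<in> S \<Longrightarrow> (\<rho> x, \<beta>) \<in> W \<and> \<rho> x \<noteq> \<beta>) \<Longrightarrow>
        \<exists>b\<in>D. (\<forall>x\<in>D. E x b \<longleftrightarrow> x \<in> S) \<and> (\<rho> b, \<beta>) \<in> W"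
  proof -
    fix \<beta> S assume h: "\<beta> \<in> Field W" "S \<subseteq> D" "\<And>x. x \<in> S \<Longrightarrow> (\<rho> x, \<beta>) \<in> W \<and> \<rho> x \<noteq> \<beta>"
    have "\<forall>\<beta>\<in>Field W. \<forall>S. S \<subseteq> D \<and> (\<forall>x\<in>S. (\<rho> x, \<beta>) \<in> W \<and> \<rho> x \<noteq> \<beta>) \<longrightarrow>
        (\<exists>b\<in>D. (\<forall>x\<in>D. E x b \<longleftrightarrow> x \<in> S) \<and> (\<rho> b, \<beta>) \<in> W)" using A by (elim conjE)
    then show "\<exists>b\<in>D. (\<forall>x\<in>D. E x b \<longleftrightarrow> x \<in> S) \<and> (\<rho> b, \<beta>) \<in> W" using h by blast
  qed
qed

lemma Vlike_wf: assumes "Vlike D E W \<rho>" shows "wf (Ed D E)"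
proof -
  have "Ed D E \<subseteq> inv_image (W - Id) \<rho>"
    unfolding Ed_def inv_image_def using VlikeD(4)[OF assms] by auto
  thus ?thesis using wf_subset wf_inv_image wo_wf VlikeD(1)[OF assms] by metis
qed

lemma Vlike_iso:
  assumes V: "Vlike D E W \<rho>" and ne: "D \<noteq> {}"
  shows "Well_order W \<and> Field W \<noteq> {} \<and> iso_V D E W"
proof -
  have wo: "Well_order W" using VlikeD(1)[OF V] .
  have wfE: "wf (Ed D E)" using Vlike_wf[OF V] .
  have ext: "ext_on D E" using VlikeD(2)[OF V] .
  have FW: "Field W \<noteq> {}" using ne VlikeD(3)[OF V] by blast
  define g :: "'a \<Rightarrow> ('a + nat) code" where "g d = (RD D E, Inl d)" for d
  have inj: "x = y" if "x \<in> D" "y \<in> D" "code_eq (RD D E, Inl x) (RD D E, Inl y)" for x y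
    using gg_inj[OF wfE ext gg_RD gg_RD] that by blast
  define rf :: "'a + nat \<Rightarrow> 'a + nat" where "rf u = (case u of Inl y \<Rightarrow> \<rho> y | Inr _ \<Rightarrow> \<rho> (SOME d. d \<in> D))" for u
  have rmap: "rank_map W (RD D E, Inl d) rf" if dD: "d \<in> D" for d
  proof (rule rank_mapI)
    fix u assume "(u, Inl d) \<in> (RD D E)\<^sup>*"
    then obtain x where "x \<in> D" "u = Inl x" using gg_reach[OF gg_RD dD] by blast
    then show "rf u \<in> Field W" unfolding rf_def using VlikeD(3)[OF V] by simp
  next
    fix u v assume "(u, v) \<in> RD D E"
    then obtain x y where "u = Inl x" "v = Inl y" "x \<in> D" "y \<in> D" "E x y" unfolding RD_iff by blast
    then show "(rf u, rf v) \<in> W \<and> rf u \<noteq> rf v" unfolding rf_def using VlikeD(4)[OF V] by simp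
  qed
  have gV: "g d \<in> Vcode W" if "d \<in> D" for d
    unfolding Vcode_def g_def is_code_def rank_below_iff using rmap[OF that] wf_RD[OF wfE] by auto
  have surj: "\<exists>d\<in>D. code_eq c (g d)" if cV: "c \<in> Vcode W" for c
  proof -
    obtain R x where c: "c = (R, x)" by fastforce
    have wfR: "wf R" using cV unfolding c Vcode_def is_code_def by simp
    obtain f where f: "rank_map W (R, x) f" using cV unfolding c Vcode_def rank_below_iff by auto
    have claim: "(u, x) \<in> R\<^sup>* \<longrightarrow> (\<exists>b\<in>D. code_eq (R, u) (RD D E, Inl b) \<and> (\<rho> b, f u) \<in> W)" for u
    proof (induction u rule: wf_induct_rule[OF wfR], rule impI)
      fix u assume IH: "\<And>u'. (u', u) \<in> R \<Longrightarrow> (u', x) \<in> R\<^sup>* \<longrightarrow> (\<exists>b\<in>D. code_eq (R, u') (RD D E, Inl b) \<and> (\<rho> b, f u') \<in> W)"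
        and ux: "(u, x) \<in> R\<^sup>*"
      have IH': "\<exists>b\<in>D. code_eq (R, u') (RD D E, Inl b) \<and> (\<rho> b, f u') \<in> W" if "(u', u) \<in> R" for u'
        using IH that ux by (meson converse_rtrancl_into_rtrancl)
      define S where "S = {b \<in> D. \<exists>u'. (u', u) \<in> R \<and> code_eq (R, u') (RD D E, Inl b)}"
      have Sb: "(\<rho> b, f u) \<in> W \<and> \<rho> b \<noteq> f u" if bS: "b \<in> S" for b
      proof -
        obtain u' where u': "(u', u) \<in> R" "code_eq (R, u') (RD D E, Inl b)" "b \<in> D" using bS unfolding S_def by blast
        obtain b' where b': "b' \<in> D" "code_eq (R, u') (RD D E, Inl b')" "(\<rho> b', f u') \<in> W" using IH'[OF u'(1)] by blast
        have "code_eq (RD D E, Inl b) (RD D E, Inl b')" using code_eq_trans[OF code_eq_sym[OF u'(2)] b'(2)] .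
        hence "b = b'" using inj u'(3) b'(1) by blast
        moreover have "(f u', f u) \<in> W \<and> f u' \<noteq> f u" using rank_map_edge[OF f u'(1) ux] .
        ultimately show ?thesis using wo_le_less[OF wo] b'(3) by blast
      qed
      have SD: "S \<subseteq> D" unfolding S_def by blast
      have fu: "f u \<in> Field W" using rank_map_field[OF f ux] .
      obtain bb where bb: "bb \<in> D" "\<forall>z\<in>D. E z bb \<longleftrightarrow> z \<in> S" "(\<rho> bb, f u) \<in> W"
        using VlikeD(5)[OF V fu SD Sb] by blast
      have "code_eq (R, u) (RD D E, Inl bb)"
      proof (rule code_eq_childI)
        fix u' assume u': "(u', u) \<in> R"
        obtain b' where b': "b' \<in> D" "code_eq (R, u') (RD D E, Inl b')" using IH'[OF u'] by blast
        hence "b' \<in> S" unfolding S_def using u' by blast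
        hence "E b' bb" using bb(2) b'(1) by blast
        hence "(Inl b', Inl bb) \<in> RD D E" unfolding RD_iff using b'(1) bb(1) by blast
        thus "\<exists>y'. (y', Inl bb) \<in> RD D E \<and> code_eq (R, u') (RD D E, y')" using b'(2) by blast
      next
        fix y' assume "(y', Inl bb) \<in> RD D E"
        then obtain x' where x': "x' \<in> D" "y' = Inl x'" "E x' bb" unfolding RD_iff by blast
        hence "x' \<in> S" using bb(2) by blast
        then obtain u' where "(u', u) \<in> R" "code_eq (R, u') (RD D E, Inl x')" unfolding S_def by blast
        thus "\<exists>x'. (x', u) \<in> R \<and> code_eq (R, x') (RD D E, y')" using x'(2) by blast
      qed
      thus "\<exists>b\<in>D. code_eq (R, u) (RD D E, Inl b) \<and> (\<rho> b, f u) \<in> W" using bb(1,3) by blast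
    qed
    then obtain b where "b \<in> D" "code_eq (R, x) (RD D E, Inl b)" using rtrancl_refl by blast
    thus ?thesis unfolding c g_def by blast
  qed
  have mem: "E d e \<longleftrightarrow> code_mem (g d) (g e)" if "d \<in> D" "e \<in> D" for d e
  proof
    assume "E d e"
    hence "(Inl d, Inl e) \<in> RD D E" unfolding RD_iff using that by blast
    thus "code_mem (g d) (g e)" unfolding code_mem_def g_def using code_eq_refl by fastforce
  next
    assume "code_mem (g d) (g e)"
    then obtain z where z: "(z, Inl e) \<in> RD D E" "code_eq (RD D E, Inl d) (RD D E, z)"
      unfolding code_mem_def g_def by auto
    then obtain x where x: "x \<in> D" "z = Inl x" "E x e" unfolding RD_iff by blast
    hence "d = x" using inj[OF that(1) x(1)] z(2) by simp
    thus "E d e" using x by simp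
  qed
  have "iso_V D E W"
    unfolding iso_V_def
    apply (rule exI[of _ g])
    using gV surj mem inj unfolding g_def by blast
  thus ?thesis using wo FW by blast
qed




lemma Vcode_sub: "(R, x) \<in> Vcode r \<Longrightarrow> (u, x) \<in> R\<^sup>* \<Longrightarrow> (R, u) \<in> Vcode r"
  unfolding Vcode_def is_code_def rank_below_iff using rank_map_sub by fastforce

lemma iso_Vlike:
  assumes wo: "Well_order r" and iso: "iso_V D E r"
  shows "\<exists>\<rho>. Vlike D E r \<rho>"
proof -
  obtain g :: "'a \<Rightarrow> ('a + nat) code" where gV: "\<forall>d\<in>D. g d \<in> Vcode r"
    and ginj: "\<forall>d\<in>D. \<forall>e\<in>D. code_eq (g d) (g e) \<longrightarrow> d = e"
    and gsurj: "\<forall>c\<in>Vcode r. \<exists>d\<in>D. code_eq c (g d)"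
    and gmem: "\<forall>d\<in>D. \<forall>e\<in>D. E d e \<longleftrightarrow> code_mem (g d) (g e)"
    using iso unfolding iso_V_def by blast
  define GR where "GR d = fst (g d)" for d
  define Gx where "Gx d = snd (g d)" for d
  have g_eq: "g d = (GR d, Gx d)" for d unfolding GR_def Gx_def by simp
  have gV': "(GR d, Gx d) \<in> Vcode r" if "d \<in> D" for d using gV that g_eq by metis
  have ginj': "d = e" if "d \<in> D" "e \<in> D" "code_eq (GR d, Gx d) (GR e, Gx e)" for d e
    using ginj that g_eq by metis
  have gsurj': "\<exists>d\<in>D. code_eq c (GR d, Gx d)" if "c \<in> Vcode r" for c
    using gsurj that g_eq by metis
  have gmem': "E d e \<longleftrightarrow> (\<exists>z. (z, Gx e) \<in> GR e \<and> code_eq (GR d, Gx d) (GR e, z))" if "d \<in> D" "e \<in> D" for d e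
    using gmem that g_eq unfolding code_mem_def by (metis fst_conv snd_conv)
  define A where "A d = {f (Gx d) | f. rank_map r (GR d, Gx d) f}" for d
  define \<rho> where "\<rho> d = wo_rel.minim r (A d)" for d
  have AF: "A d \<subseteq> Field r" for d unfolding A_def using rank_map_field by fastforce
  have Ane: "A d \<noteq> {}" if "d \<in> D" for d
    using gV'[OF that] unfolding A_def Vcode_def rank_below_iff by auto
  have \<rho>_in: "\<exists>f. rank_map r (GR d, Gx d) f \<and> f (Gx d) = \<rho> d" if "d \<in> D" for d
    using wo_minim_in[OF wo AF Ane[OF that]] unfolding \<rho>_def A_def by auto
  have \<rho>F: "\<rho> d \<in> Field r" if "d \<in> D" for d
    using wo_minim_in[OF wo AF Ane[OF that]] AF unfolding \<rho>_def by blast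
  have K: "(\<rho> d, f x) \<in> r" if Kh: "d \<in> D" "code_eq (R, x) (GR d, Gx d)" "rank_map r (R, x) f" for d R x f
  proof -
    obtain h where h: "rank_map r (GR d, Gx d) h" "(h (Gx d), f x) \<in> r"
      using transport[OF wo Kh(2,3)] by blast
    have "h (Gx d) \<in> A d" unfolding A_def using h(1) by blast
    hence "(\<rho> d, h (Gx d)) \<in> r" unfolding \<rho>_def using wo_minim_least[OF wo AF] by blast
    thus ?thesis using wo_trans[OF wo _ h(2)] by blast
  qed
  have V3: "(\<rho> x, \<rho> y) \<in> r \<and> \<rho> x \<noteq> \<rho> y" if xy: "x \<in> D" "y \<in> D" "E x y" for x y
  proof -
    obtain z where z: "(z, Gx y) \<in> GR y" "code_eq (GR x, Gx x) (GR y, z)" using gmem'[OF xy(1,2)] xy(3) by blast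
    obtain f where f: "rank_map r (GR y, Gx y) f" "f (Gx y) = \<rho> y" using \<rho>_in[OF xy(2)] by blast
    have fz: "rank_map r (GR y, z) f" using rank_map_sub[OF f(1)] z(1) by blast
    have "(\<rho> x, f z) \<in> r" using K[OF xy(1) code_eq_sym[OF z(2)] fz] .
    moreover have "(f z, f (Gx y)) \<in> r \<and> f z \<noteq> f (Gx y)" using rank_map_edge[OF f(1) z(1)] by blast
    ultimately show ?thesis using wo_le_less[OF wo] f(2) by metis
  qed
  have wfE: "wf (Ed D E)"
  proof -
    have "Ed D E \<subseteq> inv_image (r - Id) \<rho>"
      unfolding Ed_def inv_image_def using V3 by auto
    thus ?thesis using wf_subset wf_inv_image wo_wf[OF wo] by metis
  qed
  have GD: "y \<in> D \<longrightarrow> code_eq (R, Inl y) (GR y, Gx y)" if ggR: "gg D E R" for R y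
  proof (induction y rule: wf_induct_rule[OF wfE], rule impI)
    fix y assume IH: "\<And>y'. (y', y) \<in> Ed D E \<Longrightarrow> y' \<in> D \<longrightarrow> code_eq (R, Inl y') (GR y', Gx y')"
      and yD: "y \<in> D"
    show "code_eq (R, Inl y) (GR y, Gx y)"
    proof (rule code_eq_childI)
      fix x' assume "(x', Inl y) \<in> R"
      then obtain x where x: "x \<in> D" "x' = Inl x" "E x y" using ggE[OF ggR yD] by blast
      have "(x, y) \<in> Ed D E" unfolding Ed_def using x yD by blast
      hence c1: "code_eq (R, Inl x) (GR x, Gx x)" using IH x(1) by blast
      obtain z where z: "(z, Gx y) \<in> GR y" "code_eq (GR x, Gx x) (GR y, z)" using gmem'[OF x(1) yD] x(3) by blast
      show "\<exists>y'. (y', Gx y) \<in> GR y \<and> code_eq (R, x') (GR y, y')"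
        using z code_eq_trans[OF c1 z(2)] x(2) by blast
    next
      fix z assume z: "(z, Gx y) \<in> GR y"
      have "(GR y, z) \<in> Vcode r" using Vcode_sub[OF gV'[OF yD]] z by blast
      then obtain x where x: "x \<in> D" "code_eq (GR y, z) (GR x, Gx x)" using gsurj' by blast
      have "E x y" using gmem'[OF x(1) yD] z code_eq_sym[OF x(2)] by blast
      hence "(Inl x, Inl y) \<in> R" using ggI[OF ggR yD x(1)] by blast
      moreover have "(x, y) \<in> Ed D E" unfolding Ed_def using x yD \<open>E x y\<close> by blast
      hence "code_eq (R, Inl x) (GR x, Gx x)" using IH x(1) by blast
      hence "code_eq (R, Inl x) (GR y, z)" using code_eq_trans code_eq_sym x(2) by blast
      ultimately show "\<exists>x'. (x', Inl y) \<in> R \<and> code_eq (R, x') (GR y, z)" by blast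
    qed
  qed
  have ext: "ext_on D E" unfolding ext_on_def
  proof (intro ballI impI)
    fix a b assume ab: "a \<in> D" "b \<in> D" and same: "\<forall>x\<in>D. E x a \<longleftrightarrow> E x b"
    have "code_eq (GR a, Gx a) (GR b, Gx b)"
    proof (rule code_eq_childI)
      fix u' assume u': "(u', Gx a) \<in> GR a"
      have "(GR a, u') \<in> Vcode r" using Vcode_sub[OF gV'[OF ab(1)]] u' by blast
      then obtain x where x: "x \<in> D" "code_eq (GR a, u') (GR x, Gx x)" using gsurj' by blast
      have "E x a" using gmem'[OF x(1) ab(1)] u' code_eq_sym[OF x(2)] by blast
      hence "E x b" using same x(1) by blast
      then obtain z where z: "(z, Gx b) \<in> GR b" "code_eq (GR x, Gx x) (GR b, z)" using gmem'[OF x(1) ab(2)] by blast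
      show "\<exists>y'. (y', Gx b) \<in> GR b \<and> code_eq (GR a, u') (GR b, y')"
        using z code_eq_trans[OF x(2) z(2)] by blast
    next
      fix u' assume u': "(u', Gx b) \<in> GR b"
      have "(GR b, u') \<in> Vcode r" using Vcode_sub[OF gV'[OF ab(2)]] u' by blast
      then obtain x where x: "x \<in> D" "code_eq (GR b, u') (GR x, Gx x)" using gsurj' by blast
      have "E x b" using gmem'[OF x(1) ab(2)] u' code_eq_sym[OF x(2)] by blast
      hence "E x a" using same x(1) by blast
      then obtain z where z: "(z, Gx a) \<in> GR a" "code_eq (GR x, Gx x) (GR a, z)" using gmem'[OF x(1) ab(1)] by blast
      show "\<exists>x'. (x', Gx a) \<in> GR a \<and> code_eq (GR a, x') (GR b, u')"
        using z code_eq_trans[OF code_eq_sym[OF z(2)] code_eq_sym[OF x(2)]] by blast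
    qed
    thus "a = b" using ginj' ab by blast
  qed
  have V4: "\<exists>b\<in>D. (\<forall>x\<in>D. E x b \<longleftrightarrow> x \<in> S) \<and> (\<rho> b, \<beta>) \<in> r"
    if \<beta>F: "\<beta> \<in> Field r" and SD: "S \<subseteq> D" and Sl: "\<forall>x\<in>S. (\<rho> x, \<beta>) \<in> r \<and> \<rho> x \<noteq> \<beta>" for \<beta> S
  proof -
    define rf :: "'a + nat \<Rightarrow> 'a + nat" where "rf u = (case u of Inl y \<Rightarrow> \<rho> y | Inr _ \<Rightarrow> \<beta>)" for u
    have rm: "rank_map r (RS D E S, Inr 0) rf"
    proof (rule rank_mapI)
      fix u assume "(u, Inr 0) \<in> (RS D E S)\<^sup>*"
      hence "u = Inr 0 \<or> (\<exists>x\<in>D. u = Inl x)" using RS_reach[OF SD] by blast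
      thus "rf u \<in> Field r" unfolding rf_def using \<beta>F \<rho>F by auto
    next
      fix u v assume "(u, v) \<in> RS D E S"
      hence "(\<exists>x y. u = Inl x \<and> v = Inl y \<and> x \<in> D \<and> y \<in> D \<and> E x y) \<or> (\<exists>x\<in>S. u = Inl x \<and> v = Inr 0)"
        unfolding RS_iff .
      thus "(rf u, rf v) \<in> r \<and> rf u \<noteq> rf v"
      proof
        assume "\<exists>x y. u = Inl x \<and> v = Inl y \<and> x \<in> D \<and> y \<in> D \<and> E x y"
        then obtain x y where "u = Inl x" "v = Inl y" "x \<in> D" "y \<in> D" "E x y" by blast
        thus ?thesis unfolding rf_def using V3 by simp
      next
        assume "\<exists>x\<in>S. u = Inl x \<and> v = Inr 0"
        then obtain x where "x \<in> S" "u = Inl x" "v = Inr 0" by blast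
        thus ?thesis unfolding rf_def using Sl by simp
      qed
    qed
    have "(RS D E S, Inr 0) \<in> Vcode r"
      unfolding Vcode_def is_code_def rank_below_iff using rm wf_RS[OF wfE] by auto
    then obtain b where b: "b \<in> D" "code_eq (RS D E S, Inr 0) (GR b, Gx b)" using gsurj' by blast
    have rb: "(\<rho> b, \<beta>) \<in> r" using K[OF b rm] unfolding rf_def by simp
    have "E x b \<longleftrightarrow> x \<in> S" if xD: "x \<in> D" for x
    proof
      assume "E x b"
      then obtain z where z: "(z, Gx b) \<in> GR b" "code_eq (GR x, Gx x) (GR b, z)" using gmem'[OF xD b(1)] by blast
      obtain w where w: "(w, Inr 0) \<in> RS D E S" "code_eq (RS D E S, w) (GR b, z)"
        using code_eq_childD2[OF b(2) z(1)] by blast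
      obtain x' where x': "x' \<in> S" "w = Inl x'" using w(1) unfolding RS_child0 by blast
      have x'D: "x' \<in> D" using x'(1) SD by blast
      have "code_eq (RS D E S, Inl x') (GR x', Gx x')" using GD[OF gg_RS] x'D by blast
      hence "code_eq (GR x, Gx x) (GR x', Gx x')"
        using code_eq_trans[OF z(2) code_eq_sym[OF w(2)]] x'(2) code_eq_trans by blast
      hence "x = x'" using ginj'[OF xD x'D] by blast
      thus "x \<in> S" using x'(1) by simp
    next
      assume "x \<in> S"
      hence "(Inl x, Inr 0) \<in> RS D E S" unfolding RS_child0 by blast
      then obtain z where z: "(z, Gx b) \<in> GR b" "code_eq (RS D E S, Inl x) (GR b, z)"
        using code_eq_childD1[OF b(2)] by blast
      have "code_eq (RS D E S, Inl x) (GR x, Gx x)" using GD[OF gg_RS] xD by blast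
      hence "code_eq (GR x, Gx x) (GR b, z)" using code_eq_trans[OF code_eq_sym z(2)] by blast
      thus "E x b" using gmem'[OF xD b(1)] z(1) by blast
    qed
    thus ?thesis using b(1) rb by blast
  qed
  have "Vlike D E r \<rho>" unfolding Vlike_def
  proof (intro conjI ballI allI impI)
    fix \<beta> S assume "\<beta> \<in> Field r" "S \<subseteq> D \<and> (\<forall>x\<in>S. (\<rho> x, \<beta>) \<in> r \<and> \<rho> x \<noteq> \<beta>)"
    thus "\<exists>b\<in>D. (\<forall>x\<in>D. E x b \<longleftrightarrow> x \<in> S) \<and> (\<rho> b, \<beta>) \<in> r" using V4 by blast
  qed (use wo ext \<rho>F V3 in auto)
  thus ?thesis by blast
qed




lemma Vlike_LT:
  assumes V: "Vlike D E W \<rho>"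
  shows "LT_model D E"
proof -
  have wo: "Well_order W" using VlikeD(1)[OF V] .
  have ext: "ext_on D E" using VlikeD(2)[OF V] .
  have V2: "\<rho> x \<in> Field W" if "x \<in> D" for x using VlikeD(3)[OF V that] .
  have V3: "(\<rho> x, \<rho> y) \<in> W \<and> \<rho> x \<noteq> \<rho> y" if "x \<in> D" "y \<in> D" "E x y" for x y
    using VlikeD(4)[OF V that] .
  have V4: "\<exists>b\<in>D. (\<forall>x\<in>D. E x b \<longleftrightarrow> x \<in> S) \<and> (\<rho> b, \<beta>) \<in> W"
    if "\<beta> \<in> Field W" "S \<subseteq> D" "\<And>x. x \<in> S \<Longrightarrow> (\<rho> x, \<beta>) \<in> W \<and> \<rho> x \<noteq> \<beta>" for \<beta> S
    using VlikeD(5)[OF V that] by blast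
  define Vs where "Vs \<gamma> = (SOME b. b \<in> D \<and> (\<forall>x\<in>D. E x b \<longleftrightarrow> (\<rho> x, \<gamma>) \<in> W \<and> \<rho> x \<noteq> \<gamma>) \<and> (\<rho> b, \<gamma>) \<in> W)" for \<gamma>
  have Vs: "Vs \<gamma> \<in> D \<and> (\<forall>x\<in>D. E x (Vs \<gamma>) \<longleftrightarrow> (\<rho> x, \<gamma>) \<in> W \<and> \<rho> x \<noteq> \<gamma>) \<and> (\<rho> (Vs \<gamma>), \<gamma>) \<in> W"
    if \<gamma>F: "\<gamma> \<in> Field W" for \<gamma>
  proof -
    obtain b where "b \<in> D" "\<forall>x\<in>D. E x b \<longleftrightarrow> x \<in> {x \<in> D. (\<rho> x, \<gamma>) \<in> W \<and> \<rho> x \<noteq> \<gamma>}" "(\<rho> b, \<gamma>) \<in> W"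
      using V4[OF \<gamma>F, of "{x \<in> D. (\<rho> x, \<gamma>) \<in> W \<and> \<rho> x \<noteq> \<gamma>}"] by blast
    hence "\<exists>b. b \<in> D \<and> (\<forall>x\<in>D. E x b \<longleftrightarrow> (\<rho> x, \<gamma>) \<in> W \<and> \<rho> x \<noteq> \<gamma>) \<and> (\<rho> b, \<gamma>) \<in> W" by blast
    thus ?thesis unfolding Vs_def by (rule someI_ex)
  qed
  have VsD: "Vs \<gamma> \<in> D" if "\<gamma> \<in> Field W" for \<gamma> using Vs[OF that] by blast
  have VsE: "E x (Vs \<gamma>) \<longleftrightarrow> (\<rho> x, \<gamma>) \<in> W \<and> \<rho> x \<noteq> \<gamma>" if "\<gamma> \<in> Field W" "x \<in> D" for \<gamma> x
    using Vs[OF that(1)] that(2) by blast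
  have \<rho>Vs: "\<rho> (Vs \<gamma>) = \<gamma>" if \<gamma>F: "\<gamma> \<in> Field W" for \<gamma>
  proof (rule ccontr)
    assume ne: "\<rho> (Vs \<gamma>) \<noteq> \<gamma>"
    have "(\<rho> (Vs \<gamma>), \<gamma>) \<in> W" using Vs[OF \<gamma>F] by blast
    hence "E (Vs \<gamma>) (Vs \<gamma>)" using VsE[OF \<gamma>F VsD[OF \<gamma>F]] ne by blast
    thus False using V3[OF VsD[OF \<gamma>F] VsD[OF \<gamma>F]] by blast
  qed
  have rank_le: "(\<rho> x, \<gamma>) \<in> W"
    if xD: "x \<in> D" and \<gamma>F: "\<gamma> \<in> Field W" and mem: "\<And>y. y \<in> D \<Longrightarrow> E y x \<Longrightarrow> (\<rho> y, \<gamma>) \<in> W \<and> \<rho> y \<noteq> \<gamma>" for x \<gamma>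
  proof -
    obtain b where b: "b \<in> D" "\<forall>y\<in>D. E y b \<longleftrightarrow> y \<in> {y \<in> D. E y x}" "(\<rho> b, \<gamma>) \<in> W"
      using V4[OF \<gamma>F, of "{y \<in> D. E y x}"] mem by blast
    have "b = x" using ext b(1,2) xD unfolding ext_on_def by blast
    thus ?thesis using b(3) by simp
  qed
  have sep: "\<exists>b\<in>D. \<forall>x\<in>D. E x b \<longleftrightarrow> (x \<in> F \<and> E x a)" if aD: "a \<in> D" for F a
  proof -
    obtain b where b: "b \<in> D" "\<forall>x\<in>D. E x b \<longleftrightarrow> x \<in> {x \<in> D. x \<in> F \<and> E x a}"
      using V4[OF V2[OF aD], of "{x \<in> D. x \<in> F \<and> E x a}"] V3 aD by blast
    thus ?thesis by blast
  qed
  have strat: "\<exists>l\<in>D. level D E l \<and> sub_M D E a l" if aD: "a \<in> D" for a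
  proof -
    define \<beta> where "\<beta> = \<rho> a"
    have \<beta>F: "\<beta> \<in> Field W" unfolding \<beta>_def using V2[OF aD] .
    define l where "l = Vs \<beta>"
    define H where "H = {Vs \<gamma> | \<gamma>. \<gamma> \<in> Field W \<and> (\<gamma>, \<beta>) \<in> W \<and> \<gamma> \<noteq> \<beta>}"
    have HD: "H \<subseteq> D" unfolding H_def using VsD by blast
    have Hl: "(\<rho> x, \<beta>) \<in> W \<and> \<rho> x \<noteq> \<beta>" if "x \<in> H" for x
      using that \<rho>Vs unfolding H_def by auto
    obtain h where h: "h \<in> D" "\<forall>x\<in>D. E x h \<longleftrightarrow> x \<in> H" using V4[OF \<beta>F HD Hl] by blast
    have lD: "l \<in> D" unfolding l_def using VsD[OF \<beta>F] .
    have sub: "sub_M D E a l" unfolding sub_M_def l_def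
      using VsE[OF \<beta>F] V3 aD unfolding \<beta>_def by blast
    have pot: "is_pot_of D E l h" unfolding is_pot_of_def
    proof (intro ballI iffI)
      fix x assume xD: "x \<in> D" and "E x l"
      hence xl: "(\<rho> x, \<beta>) \<in> W \<and> \<rho> x \<noteq> \<beta>" using VsE[OF \<beta>F xD] unfolding l_def by blast
      define c where "c = Vs (\<rho> x)"
      have cD: "c \<in> D" unfolding c_def using VsD[OF V2[OF xD]] .
      have "c \<in> H" unfolding H_def c_def using xl V2[OF xD] by blast
      hence "E c h" using h cD by blast
      moreover have "sub_M D E x c" unfolding sub_M_def c_def
        using VsE[OF V2[OF xD]] V3 xD by blast
      ultimately show "\<exists>c\<in>D. E c h \<and> sub_M D E x c" using cD by blast
    next
      fix x assume xD: "x \<in> D" and "\<exists>c\<in>D. E c h \<and> sub_M D E x c"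
      then obtain c where c: "c \<in> D" "E c h" "sub_M D E x c" by blast
      have "c \<in> H" using h c by blast
      then obtain \<gamma> where \<gamma>: "c = Vs \<gamma>" "\<gamma> \<in> Field W" "(\<gamma>, \<beta>) \<in> W" "\<gamma> \<noteq> \<beta>" unfolding H_def by blast
      have "(\<rho> x, \<gamma>) \<in> W"
      proof (rule rank_le[OF xD \<gamma>(2)])
        fix y assume "y \<in> D" "E y x"
        hence "E y c" using c(3) unfolding sub_M_def by blast
        thus "(\<rho> y, \<gamma>) \<in> W \<and> \<rho> y \<noteq> \<gamma>" using VsE[OF \<gamma>(2) \<open>y \<in> D\<close>] \<gamma>(1) by blast
      qed
      hence "(\<rho> x, \<beta>) \<in> W \<and> \<rho> x \<noteq> \<beta>" using wo_le_less[OF wo _ \<gamma>(3,4)] by blast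
      thus "E x l" unfolding l_def using VsE[OF \<beta>F xD] by blast
    qed
    have hist: "history D E h" unfolding history_def
    proof (intro ballI impI iffI)
      fix x y assume xD: "x \<in> D" and "E x h" and yD: "y \<in> D"
      have "x \<in> H" using h xD \<open>E x h\<close> by blast
      then obtain \<gamma> where \<gamma>: "x = Vs \<gamma>" "\<gamma> \<in> Field W" "(\<gamma>, \<beta>) \<in> W" "\<gamma> \<noteq> \<beta>" unfolding H_def by blast
      {
        assume "E y x"
        hence yl: "(\<rho> y, \<gamma>) \<in> W \<and> \<rho> y \<noteq> \<gamma>" using VsE[OF \<gamma>(2) yD] \<gamma>(1) by blast
        define c where "c = Vs (\<rho> y)"
        have cD: "c \<in> D" unfolding c_def using VsD[OF V2[OF yD]] .
        have \<rho>c: "\<rho> c = \<rho> y" unfolding c_def using \<rho>Vs[OF V2[OF yD]] .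
        have "E c x" using VsE[OF \<gamma>(2) cD] \<gamma>(1) yl \<rho>c by simp
        moreover have "(\<rho> y, \<beta>) \<in> W \<and> \<rho> y \<noteq> \<beta>" using wo_less_le[OF wo _ _ \<gamma>(3)] yl \<gamma>(4)
          by (metis wo wo_antisym)
        hence "c \<in> H" unfolding H_def c_def using V2[OF yD] by blast
        hence "E c h" using h cD by blast
        moreover have "sub_M D E y c" unfolding sub_M_def c_def
          using VsE[OF V2[OF yD]] V3 yD by blast
        ultimately show "\<exists>c\<in>D. E c x \<and> E c h \<and> sub_M D E y c" using cD by blast
      next
        assume "\<exists>c\<in>D. E c x \<and> E c h \<and> sub_M D E y c"
        then obtain c where c: "c \<in> D" "E c x" "E c h" "sub_M D E y c" by blast
        have "c \<in> H" using h c by blast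
        then obtain \<delta> where \<delta>: "c = Vs \<delta>" "\<delta> \<in> Field W" unfolding H_def by blast
        have "(\<rho> c, \<gamma>) \<in> W \<and> \<rho> c \<noteq> \<gamma>" using VsE[OF \<gamma>(2) c(1)] \<gamma>(1) c(2) by blast
        hence d\<gamma>: "(\<delta>, \<gamma>) \<in> W \<and> \<delta> \<noteq> \<gamma>" using \<rho>Vs[OF \<delta>(2)] \<delta>(1) by simp
        have "(\<rho> y, \<delta>) \<in> W"
        proof (rule rank_le[OF yD \<delta>(2)])
          fix z assume "z \<in> D" "E z y"
          hence "E z c" using c(4) unfolding sub_M_def by blast
          thus "(\<rho> z, \<delta>) \<in> W \<and> \<rho> z \<noteq> \<delta>" using VsE[OF \<delta>(2) \<open>z \<in> D\<close>] \<delta>(1) by blast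
        qed
        hence "(\<rho> y, \<gamma>) \<in> W \<and> \<rho> y \<noteq> \<gamma>" using wo_le_less[OF wo] d\<gamma> by blast
        thus "E y x" using VsE[OF \<gamma>(2) yD] \<gamma>(1) by blast
      }
    qed
    show ?thesis using lD sub pot hist h(1) unfolding level_def by blast
  qed
  show ?thesis unfolding LT_model_def
    using ext sep strat unfolding ext_on_def by blast
qed




locale LTm =
  fixes D :: "'a set" and E :: "'a \<Rightarrow> 'a \<Rightarrow> bool"
  assumes LT: "LT_model D E"
begin

lemma ext: "ext_on D E"
  using LT unfolding LT_model_def ext_on_def by blast

lemma sep: "a \<in> D \<Longrightarrow> \<exists>b\<in>D. \<forall>x\<in>D. E x b \<longleftrightarrow> (x \<in> F \<and> E x a)"
  using LT unfolding LT_model_def by blast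

lemma strat: "a \<in> D \<Longrightarrow> \<exists>l\<in>D. level D E l \<and> sub_M D E a l"
  using LT unfolding LT_model_def by blast

lemma histD: "history D E h \<Longrightarrow> x \<in> D \<Longrightarrow> E x h \<Longrightarrow> y \<in> D \<Longrightarrow>
   E y x \<longleftrightarrow> (\<exists>c\<in>D. E c x \<and> E c h \<and> sub_M D E y c)"
  unfolding history_def by blast

lemma potD: "is_pot_of D E l h \<Longrightarrow> x \<in> D \<Longrightarrow> E x l \<longleftrightarrow> (\<exists>c\<in>D. E c h \<and> sub_M D E x c)"
  unfolding is_pot_of_def by blast

lemma subD: "sub_M D E x c \<Longrightarrow> y \<in> D \<Longrightarrow> E y x \<Longrightarrow> E y c"
  unfolding sub_M_def by blast

lemma sub_refl: "sub_M D E x x"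
  unfolding sub_M_def by blast

lemma sub_trans: "sub_M D E x c \<Longrightarrow> sub_M D E c d \<Longrightarrow> sub_M D E x d"
  unfolding sub_M_def by blast

lemma hist_min:
  assumes h: "history D E h" and B: "B \<subseteq> {c \<in> D. E c h}" "b0 \<in> B"
  shows "\<exists>b\<in>B. \<forall>b'\<in>B. \<not> E b' b"
proof (rule ccontr)
  assume "\<not> (\<exists>b\<in>B. \<forall>b'\<in>B. \<not> E b' b)"
  hence nomin: "\<exists>b'\<in>B. E b' b" if "b \<in> B" for b using that by blast
  have b0D: "b0 \<in> D" using B by blast
  obtain I where I: "I \<in> D" "\<forall>x\<in>D. E x I \<longleftrightarrow> (x \<in> {x. (\<forall>b\<in>B. E x b) \<and> \<not> E x x} \<and> E x b0)"
    using sep[OF b0D] by blast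
  have IB: "E I b" if bB: "b \<in> B" for b
  proof -
    have bD: "b \<in> D" and bh: "E b h" using bB B by auto
    obtain b' where b': "b' \<in> B" "E b' b" using nomin[OF bB] by blast
    have b'D: "b' \<in> D" and b'h: "E b' h" using b' B by auto
    have "sub_M D E I b'" unfolding sub_M_def using I(2) b'(1) by blast
    thus "E I b" using histD[OF h bD bh I(1)] b'D b'(2) b'h by blast
  qed
  have "E I I \<longleftrightarrow> (I \<in> {x. (\<forall>b\<in>B. E x b) \<and> \<not> E x x} \<and> E I b0)" using I by blast
  thus False using IB B(2) by blast
qed

definition G where "G = Wellfounded.acc (Ed D E)"

lemma G_intro: "x \<in> D \<Longrightarrow> (\<And>y. y \<in> D \<Longrightarrow> E y x \<Longrightarrow> y \<in> G) \<Longrightarrow> x \<in> G"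
  unfolding G_def by (rule acc.accI) (auto simp: Ed_def)

lemma G_down: "x \<in> G \<Longrightarrow> y \<in> D \<Longrightarrow> x \<in> D \<Longrightarrow> E y x \<Longrightarrow> y \<in> G"
  unfolding G_def by (erule acc_downward) (simp add: Ed_def)

lemma G_sub: "x \<in> D \<Longrightarrow> c \<in> D \<Longrightarrow> c \<in> G \<Longrightarrow> sub_M D E x c \<Longrightarrow> x \<in> G"
  by (rule G_intro) (auto intro: G_down dest: subD)

lemma hist_G: assumes h: "history D E h" and c: "c \<in> D" "E c h" shows "c \<in> G"
proof (rule ccontr)
  assume "c \<notin> G"
  then obtain b where b: "b \<in> {c \<in> D. E c h \<and> c \<notin> G}" and bmin: "\<forall>b'\<in>{c \<in> D. E c h \<and> c \<notin> G}. \<not> E b' b"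
    using hist_min[OF h, of "{c \<in> D. E c h \<and> c \<notin> G}" c] c by blast
  have bD: "b \<in> D" "E b h" "b \<notin> G" using b by auto
  have "\<exists>y. y \<in> D \<and> E y b \<and> y \<notin> G"
  proof (rule ccontr)
    assume "\<not> (\<exists>y. y \<in> D \<and> E y b \<and> y \<notin> G)"
    hence "b \<in> G" using G_intro[OF bD(1)] by blast
    thus False using bD by blast
  qed
  then obtain y where y: "y \<in> D" "E y b" "y \<notin> G" by blast
  obtain c' where c': "c' \<in> D" "E c' b" "E c' h" "sub_M D E y c'"
    using histD[OF h bD(1,2) y(1)] y(2) by blast
  have "c' \<in> G" using bmin c' by blast
  hence "y \<in> G" using G_sub[OF y(1) c'(1)] c'(4) by blast
  thus False using y(3) by blast
qed

lemma all_G: assumes x: "x \<in> D" shows "x \<in> G"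
proof -
  obtain l where l: "l \<in> D" "level D E l" "sub_M D E x l" using strat[OF x] by blast
  obtain h where h: "h \<in> D" "history D E h" "is_pot_of D E l h" using l(2) unfolding level_def by blast
  show ?thesis
  proof (rule G_intro[OF x])
    fix y assume y: "y \<in> D" "E y x"
    hence "E y l" using subD[OF l(3)] by blast
    then obtain c where c: "c \<in> D" "E c h" "sub_M D E y c" using potD[OF h(3) y(1)] by blast
    have "c \<in> G" using hist_G[OF h(2) c(1,2)] .
    thus "y \<in> G" using G_sub[OF y(1) c(1)] c(3) by blast
  qed
qed

lemma wfE: "wf (Ed D E)"
proof (rule acc_wfI, rule allI)
  fix x
  show "x \<in> Wellfounded.acc (Ed D E)"
  proof (cases "x \<in> D")
    case True then show ?thesis using all_G G_def by blast
  next
    case False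
    show ?thesis by (rule acc.accI) (use False in \<open>auto simp: Ed_def\<close>)
  qed
qed

lemma irrefl: "x \<in> D \<Longrightarrow> \<not> E x x"
  using wf_not_refl[OF wfE, of x] unfolding Ed_def by blast

lemma asym: "x \<in> D \<Longrightarrow> y \<in> D \<Longrightarrow> E x y \<Longrightarrow> \<not> E y x"
  using wf_not_sym[OF wfE, of x y] unfolding Ed_def by blast

lemma hist_trans:
  assumes h: "history D E h"
  shows "c \<in> D \<longrightarrow> E c h \<longrightarrow> (\<forall>z\<in>D. E z c \<longrightarrow> sub_M D E z c)"
proof (induction c rule: wf_induct_rule[OF wfE])
  case (1 c)
  show ?case
  proof (intro impI ballI)
    assume cD: "c \<in> D" and ch: "E c h"
    fix z assume zD: "z \<in> D" and zc: "E z c"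
    obtain c' where c': "c' \<in> D" "E c' c" "E c' h" "sub_M D E z c'"
      using histD[OF h cD ch zD] zc by blast
    have IH: "\<forall>z\<in>D. E z c' \<longrightarrow> sub_M D E z c'"
      using 1 c' cD unfolding Ed_def by blast
    show "sub_M D E z c" unfolding sub_M_def
    proof (intro ballI impI)
      fix w assume wD: "w \<in> D" and wz: "E w z"
      have "E w c'" using subD[OF c'(4) wD wz] .
      hence "sub_M D E w c'" using IH wD by blast
      thus "E w c" using histD[OF h cD ch wD] c' by blast
    qed
  qed
qed

definition Lev where "Lev l \<longleftrightarrow> l \<in> D \<and> level D E l"

lemma hist_Lev: assumes h: "history D E h" and c: "c \<in> D" "E c h" shows "Lev c"
proof -
  obtain h' where h': "h' \<in> D" "\<forall>x\<in>D. E x h' \<longleftrightarrow> (x \<in> {x. E x h} \<and> E x c)"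
    using sep[OF c(1)] by blast
  have h'E: "E x h' \<longleftrightarrow> E x h \<and> E x c" if "x \<in> D" for x using h'(2) that by blast
  have "history D E h'" unfolding history_def
  proof (intro ballI impI)
    fix x y assume xD: "x \<in> D" and xh': "E x h'" and yD: "y \<in> D"
    have xh: "E x h" and xc: "E x c" using h'E[OF xD] xh' by auto
    have tr: "sub_M D E x c" using hist_trans[OF h] c xD xc by blast
    show "E y x \<longleftrightarrow> (\<exists>c\<in>D. E c x \<and> E c h' \<and> sub_M D E y c)"
    proof
      assume "E y x"
      then obtain d where d: "d \<in> D" "E d x" "E d h" "sub_M D E y d" using histD[OF h xD xh yD] by blast
      have "E d c" using subD[OF tr d(1,2)] .
      thus "\<exists>c\<in>D. E c x \<and> E c h' \<and> sub_M D E y c" using d h'E by blast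
    next
      assume "\<exists>c\<in>D. E c x \<and> E c h' \<and> sub_M D E y c"
      then obtain d where d: "d \<in> D" "E d x" "E d h'" "sub_M D E y d" by blast
      have "E d h" using h'E[OF d(1)] d(3) by blast
      thus "E y x" using histD[OF h xD xh yD] d by blast
    qed
  qed
  moreover have "is_pot_of D E c h'" unfolding is_pot_of_def
  proof (intro ballI)
    fix x assume xD: "x \<in> D"
    show "E x c \<longleftrightarrow> (\<exists>d\<in>D. E d h' \<and> sub_M D E x d)"
    proof
      assume "E x c"
      then obtain d where d: "d \<in> D" "E d c" "E d h" "sub_M D E x d" using histD[OF h c xD] by blast
      thus "\<exists>d\<in>D. E d h' \<and> sub_M D E x d" using h'E by blast
    next
      assume "\<exists>d\<in>D. E d h' \<and> sub_M D E x d"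
      then obtain d where d: "d \<in> D" "E d h'" "sub_M D E x d" by blast
      hence "E d c" "E d h" using h'E by auto
      thus "E x c" using histD[OF h c xD] d by blast
    qed
  qed
  ultimately show ?thesis unfolding Lev_def level_def using h'(1) c(1) by blast
qed

lemma Lev_trans: assumes l: "Lev l" and z: "z \<in> D" "c \<in> D" "E z c" "E c l" shows "E z l"
proof -
  obtain h where h: "h \<in> D" "history D E h" "is_pot_of D E l h" using l unfolding Lev_def level_def by blast
  obtain d where d: "d \<in> D" "E d h" "sub_M D E c d" using potD[OF h(3) z(2)] z(4) by blast
  have "E z d" using subD[OF d(3) z(1,3)] .
  then obtain d' where d': "d' \<in> D" "E d' d" "E d' h" "sub_M D E z d'" using histD[OF h(2) d(1,2) z(1)] by blast
  thus ?thesis using potD[OF h(3) z(1)] by blast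
qed

lemma Lev_pot: assumes l: "Lev l" and x: "x \<in> D"
  shows "E x l \<longleftrightarrow> (\<exists>m\<in>D. Lev m \<and> E m l \<and> sub_M D E x m)"
proof -
  obtain h where h: "h \<in> D" "history D E h" "is_pot_of D E l h" using l unfolding Lev_def level_def by blast
  show ?thesis
  proof
    assume "E x l"
    then obtain c where c: "c \<in> D" "E c h" "sub_M D E x c" using potD[OF h(3) x] by blast
    have "Lev c" using hist_Lev[OF h(2) c(1,2)] .
    moreover have "E c l" using potD[OF h(3) c(1)] c(1,2) sub_refl by blast
    ultimately show "\<exists>m\<in>D. Lev m \<and> E m l \<and> sub_M D E x m" using c by blast
  next
    assume "\<exists>m\<in>D. Lev m \<and> E m l \<and> sub_M D E x m"
    then obtain m where m: "m \<in> D" "E m l" "sub_M D E x m" by blast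
    obtain d where d: "d \<in> D" "E d h" "sub_M D E m d" using potD[OF h(3) m(1)] m(2) by blast
    thus "E x l" using potD[OF h(3) x] sub_trans[OF m(3) d(3)] by blast
  qed
qed

lemma Lev_lin_aux:
  "l1 \<in> D \<longrightarrow> (\<forall>l2. l2 \<in> D \<longrightarrow> Lev l1 \<longrightarrow> Lev l2 \<longrightarrow> E l1 l2 \<or> l1 = l2 \<or> E l2 l1)"
proof (induction l1 rule: wf_induct_rule[OF wfE])
  case (1 l1)
  note IH1 = 1
  show ?case
  proof (rule impI, rule allI)
    assume l1D: "l1 \<in> D"
    fix l2
    show "l2 \<in> D \<longrightarrow> Lev l1 \<longrightarrow> Lev l2 \<longrightarrow> E l1 l2 \<or> l1 = l2 \<or> E l2 l1"
    proof (induction l2 rule: wf_induct_rule[OF wfE])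
      case (1 l2)
      note IH2 = 1
      show ?case
      proof (intro impI)
        assume l2D: "l2 \<in> D" and L1: "Lev l1" and L2: "Lev l2"
        show "E l1 l2 \<or> l1 = l2 \<or> E l2 l1"
        proof (cases "\<exists>m\<in>D. Lev m \<and> E m l1 \<and> (m = l2 \<or> E l2 m)")
          case True
          then obtain m where m: "m \<in> D" "Lev m" "E m l1" "m = l2 \<or> E l2 m" by blast
          have "E l2 l1" using m Lev_trans[OF L1 l2D m(1) _ m(3)] by blast
          thus ?thesis by blast
        next
          case nA: False
          show ?thesis
          proof (cases "\<exists>m\<in>D. Lev m \<and> E m l2 \<and> (m = l1 \<or> E l1 m)")
            case True
            then obtain m where m: "m \<in> D" "Lev m" "E m l2" "m = l1 \<or> E l1 m" by blast
            have "E l1 l2" using m Lev_trans[OF L2 l1D m(1) _ m(3)] by blast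
            thus ?thesis by blast
          next
            case nB: False
            have s1: "E m l2" if "m \<in> D" "Lev m" "E m l1" for m
            proof -
              have "(m, l1) \<in> Ed D E" unfolding Ed_def using that l1D by blast
              hence "E m l2 \<or> m = l2 \<or> E l2 m" using IH1 that l2D L2 by blast
              thus ?thesis using nA that by blast
            qed
            have s2: "E m l1" if "m \<in> D" "Lev m" "E m l2" for m
            proof -
              have "(m, l2) \<in> Ed D E" unfolding Ed_def using that l2D by blast
              hence "E l1 m \<or> l1 = m \<or> E m l1" using IH2 that L1 by blast
              thus ?thesis using nB that by blast
            qed
            have "\<forall>x\<in>D. E x l1 \<longleftrightarrow> E x l2"
            proof
              fix x assume xD: "x \<in> D"
              show "E x l1 \<longleftrightarrow> E x l2"
                unfolding Lev_pot[OF L1 xD] Lev_pot[OF L2 xD] using s1 s2 by blast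
            qed
            hence "l1 = l2" using ext l1D l2D unfolding ext_on_def by blast
            thus ?thesis by blast
          qed
        qed
      qed
    qed
  qed
qed

lemma Lev_lin: "Lev l1 \<Longrightarrow> Lev l2 \<Longrightarrow> E l1 l2 \<or> l1 = l2 \<or> E l2 l1"
  using Lev_lin_aux unfolding Lev_def by blast

end




context LTm begin

lemma least_Lev: assumes a: "a \<in> D"
  shows "\<exists>m. m \<in> D \<and> Lev m \<and> sub_M D E a m \<and> (\<forall>l\<in>D. Lev l \<and> sub_M D E a l \<longrightarrow> m = l \<or> E m l)"
proof -
  obtain l0 where l0: "l0 \<in> D" "level D E l0" "sub_M D E a l0" using strat[OF a] by blast
  have l0Q: "l0 \<in> {l \<in> D. Lev l \<and> sub_M D E a l}" using l0 unfolding Lev_def by blast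
  obtain m where m: "m \<in> {l \<in> D. Lev l \<and> sub_M D E a l}"
    and mmin: "\<forall>y. (y, m) \<in> Ed D E \<longrightarrow> y \<notin> {l \<in> D. Lev l \<and> sub_M D E a l}"
    using wfE[unfolded wf_eq_minimal, rule_format, OF l0Q] by blast
  have "m = l \<or> E m l" if "l \<in> D" "Lev l" "sub_M D E a l" for l
  proof -
    have "E m l \<or> m = l \<or> E l m" using Lev_lin m that by blast
    moreover have "\<not> E l m" using mmin[rule_format, of l] that m unfolding Ed_def by blast
    ultimately show ?thesis by blast
  qed
  thus ?thesis using m by blast
qed

definition rho0 where
  "rho0 a = (SOME m. m \<in> D \<and> Lev m \<and> sub_M D E a m \<and> (\<forall>l\<in>D. Lev l \<and> sub_M D E a l \<longrightarrow> m = l \<or> E m l))"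

lemma rho0: assumes "a \<in> D"
  shows "rho0 a \<in> D" "Lev (rho0 a)" "sub_M D E a (rho0 a)"
    "\<And>l. l \<in> D \<Longrightarrow> Lev l \<Longrightarrow> sub_M D E a l \<Longrightarrow> rho0 a = l \<or> E (rho0 a) l"
proof -
  have "rho0 a \<in> D \<and> Lev (rho0 a) \<and> sub_M D E a (rho0 a) \<and> (\<forall>l\<in>D. Lev l \<and> sub_M D E a l \<longrightarrow> rho0 a = l \<or> E (rho0 a) l)"
    unfolding rho0_def by (rule someI_ex) (rule least_Lev[OF assms])
  thus "rho0 a \<in> D" "Lev (rho0 a)" "sub_M D E a (rho0 a)"
    "\<And>l. l \<in> D \<Longrightarrow> Lev l \<Longrightarrow> sub_M D E a l \<Longrightarrow> rho0 a = l \<or> E (rho0 a) l" by blast+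
qed

definition WL :: "('a + nat) rel" where
  "WL = {(Inl l, Inl l') | l l'. l \<in> D \<and> l' \<in> D \<and> Lev l \<and> Lev l' \<and> (l = l' \<or> E l l')}"

lemma WL_iff: "(u, v) \<in> WL \<longleftrightarrow> (\<exists>l l'. u = Inl l \<and> v = Inl l' \<and> l \<in> D \<and> l' \<in> D \<and> Lev l \<and> Lev l' \<and> (l = l' \<or> E l l'))"
  unfolding WL_def by blast

lemma Field_WL: "u \<in> Field WL \<longleftrightarrow> (\<exists>l. u = Inl l \<and> l \<in> D \<and> Lev l)"
proof
  assume "u \<in> Field WL"
  then obtain v where "(u, v) \<in> WL \<or> (v, u) \<in> WL" unfolding Field_def by blast
  thus "\<exists>l. u = Inl l \<and> l \<in> D \<and> Lev l" unfolding WL_iff by blast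
next
  assume "\<exists>l. u = Inl l \<and> l \<in> D \<and> Lev l"
  then obtain l where "u = Inl l" "l \<in> D" "Lev l" by blast
  hence "(u, u) \<in> WL" unfolding WL_iff by blast
  thus "u \<in> Field WL" unfolding Field_def by blast
qed

lemma WL_wo: "Well_order WL"
proof -
  have refl: "refl_on (Field WL) WL" unfolding refl_on_def
  proof
    fix x assume "x \<in> Field WL"
    then obtain l where "x = Inl l" "l \<in> D" "Lev l" unfolding Field_WL by blast
    thus "(x, x) \<in> WL" unfolding WL_iff by blast
  qed
  have sub: "WL \<subseteq> Field WL \<times> Field WL" unfolding Field_def by auto
  have trans: "trans WL" unfolding trans_def
  proof (intro allI impI)
    fix x y z assume "(x, y) \<in> WL" "(y, z) \<in> WL"
    then obtain a b c where abc: "x = Inl a" "y = Inl b" "z = Inl c" "a \<in> D" "b \<in> D" "c \<in> D"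
      "Lev a" "Lev b" "Lev c" "a = b \<or> E a b" "b = c \<or> E b c" unfolding WL_iff by blast
    have "a = c \<or> E a c" using abc Lev_trans[OF abc(9) abc(4) abc(5)] by blast
    thus "(x, z) \<in> WL" unfolding WL_iff using abc by blast
  qed
  have antisym: "antisym WL" unfolding antisym_def
  proof (intro allI impI)
    fix x y assume "(x, y) \<in> WL" "(y, x) \<in> WL"
    then obtain a b where ab: "x = Inl a" "y = Inl b" "a \<in> D" "b \<in> D" "a = b \<or> E a b" "b = a \<or> E b a"
      unfolding WL_iff by blast
    thus "x = y" using asym by blast
  qed
  have total: "total_on (Field WL) WL" unfolding total_on_def
  proof (intro ballI impI)
    fix x y assume "x \<in> Field WL" "y \<in> Field WL" "x \<noteq> y"
    then obtain a b where ab: "x = Inl a" "y = Inl b" "a \<in> D" "b \<in> D" "Lev a" "Lev b"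
      unfolding Field_WL by blast
    have "E a b \<or> a = b \<or> E b a" using Lev_lin[OF ab(5,6)] .
    thus "(x, y) \<in> WL \<or> (y, x) \<in> WL" unfolding WL_iff using ab by blast
  qed
  have wf: "wf (WL - Id)"
  proof -
    define pr :: "'a + nat \<Rightarrow> 'a" where "pr u = (case u of Inl x \<Rightarrow> x | Inr _ \<Rightarrow> undefined)" for u
    have "WL - Id \<subseteq> inv_image (Ed D E) pr"
    proof
      fix p assume "p \<in> WL - Id"
      then obtain a b where ab: "p = (Inl a, Inl b)" "a \<in> D" "b \<in> D" "a = b \<or> E a b" "a \<noteq> b"
        unfolding WL_def by blast
      thus "p \<in> inv_image (Ed D E) pr" unfolding inv_image_def Ed_def pr_def by simp
    qed
    thus ?thesis using wf_subset wf_inv_image[OF wfE] by blast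
  qed
  show ?thesis unfolding well_order_on_def linear_order_on_def partial_order_on_def preorder_on_def
    using refl trans antisym total wf sub by blast
qed

lemma LV2: "\<forall>x\<in>D. Inl (rho0 x) \<in> Field WL"
  unfolding Field_WL using rho0 by blast

lemma LV3: "\<forall>x\<in>D. \<forall>y\<in>D. E x y \<longrightarrow> (Inl (rho0 x), Inl (rho0 y)) \<in> WL \<and> Inl (rho0 x) \<noteq> (Inl (rho0 y) :: 'a + nat)"
proof (intro ballI impI)
  fix x y assume xD: "x \<in> D" and yD: "y \<in> D" and xy: "E x y"
  define m where "m = rho0 y"
  have m: "m \<in> D" "Lev m" "sub_M D E y m" unfolding m_def using rho0[OF yD] by auto
  have "E x m" using subD[OF m(3) xD xy] .
  then obtain c where c: "c \<in> D" "Lev c" "E c m" "sub_M D E x c" using Lev_pot[OF m(2) xD] by blast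
  have "rho0 x = c \<or> E (rho0 x) c" using rho0(4)[OF xD c(1,2,4)] .
  hence r: "E (rho0 x) m" using Lev_trans[OF m(2) rho0(1)[OF xD] c(1) _ c(3)] c(3) by blast
  hence "rho0 x \<noteq> m" using irrefl m(1) by blast
  moreover have "(Inl (rho0 x), Inl m) \<in> WL" unfolding WL_iff using r rho0[OF xD] m by blast
  ultimately show "(Inl (rho0 x), Inl (rho0 y)) \<in> WL \<and> Inl (rho0 x) \<noteq> (Inl (rho0 y) :: 'a + nat)"
    unfolding m_def by simp
qed

lemma LV4: "\<forall>\<beta>\<in>Field WL. \<forall>S. S \<subseteq> D \<and> (\<forall>x\<in>S. (Inl (rho0 x), \<beta>) \<in> WL \<and> Inl (rho0 x) \<noteq> \<beta>) \<longrightarrow>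
        (\<exists>b\<in>D. (\<forall>x\<in>D. E x b \<longleftrightarrow> x \<in> S) \<and> (Inl (rho0 b), \<beta>) \<in> WL)"
proof (intro ballI allI impI)
  fix \<beta> S assume \<beta>F: "\<beta> \<in> Field WL"
    and SH: "S \<subseteq> D \<and> (\<forall>x\<in>S. (Inl (rho0 x), \<beta>) \<in> WL \<and> Inl (rho0 x) \<noteq> \<beta>)"
  obtain l where l: "\<beta> = Inl l" "l \<in> D" "Lev l" using \<beta>F unfolding Field_WL by blast
  have Sl: "E x l" if xS: "x \<in> S" for x
  proof -
    have xD: "x \<in> D" using SH xS by blast
    have "(Inl (rho0 x), Inl l) \<in> WL" "rho0 x \<noteq> l" using SH xS l(1) by auto
    hence "E (rho0 x) l" unfolding WL_iff by blast
    thus "E x l" using Lev_pot[OF l(3) xD] rho0[OF xD] by blast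
  qed
  obtain b where b: "b \<in> D" "\<forall>x\<in>D. E x b \<longleftrightarrow> (x \<in> S \<and> E x l)" using sep[OF l(2)] by blast
  have bm: "\<forall>x\<in>D. E x b \<longleftrightarrow> x \<in> S" using b(2) Sl SH by blast
  have "sub_M D E b l" unfolding sub_M_def using b(2) by blast
  hence "rho0 b = l \<or> E (rho0 b) l" using rho0(4)[OF b(1) l(2,3)] by blast
  hence "(Inl (rho0 b), \<beta>) \<in> WL" unfolding WL_iff l(1) using rho0[OF b(1)] l by blast
  thus "\<exists>b\<in>D. (\<forall>x\<in>D. E x b \<longleftrightarrow> x \<in> S) \<and> (Inl (rho0 b), \<beta>) \<in> WL" using b(1) bm by blast
qed

lemma LT_Vlike: "Vlike D E WL (\<lambda>a. Inl (rho0 a))"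
  unfolding Vlike_def by (rule conjI[OF WL_wo conjI[OF ext conjI[OF LV2 conjI[OF LV3 LV4]]]])

end



theorem theorem23:
  fixes D :: "'a set" and E :: "'a \<Rightarrow> 'a \<Rightarrow> bool"
  assumes "D \<noteq> {}"
  shows "LT_model D E \<longleftrightarrow>
    (\<exists>r :: ('a + nat) rel. Well_order r \<and> Field r \<noteq> {} \<and> iso_V D E r)"
proof
  assume lt: "LT_model D E"
  interpret L: LTm D E using lt by unfold_locales
  show "\<exists>r :: ('a + nat) rel. Well_order r \<and> Field r \<noteq> {} \<and> iso_V D E r"
    using Vlike_iso[OF L.LT_Vlike assms] by blast
next
  assume "\<exists>r :: ('a + nat) rel. Well_order r \<and> Field r \<noteq> {} \<and> iso_V D E r"
  then obtain r :: "('a + nat) rel" where r: "Well_order r" "iso_V D E r" by blast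
  obtain \<rho> where "Vlike D E r \<rho>" using iso_Vlike[OF r] by blast
  thus "LT_model D E" by (rule Vlike_LT)
qed

end
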